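(* Let $c\in\mathbb{R}$, let $I_c=[0,-1/c]$ if $c<0$ and $I_c=[0,+\infty)$ if $c\geq0$, and let $n>0$ be real with $n>c$ if $c\geq 0$, or $n=-cl$ for some $l\in\mathbb{N}$ if $c<0$. For $k\in\mathbb{N}_0$, $x\in I_c$ let $$p_{n,k}^{[c]}(x)=(-1)^k\binom{-n/c}{k}(cx)^k(1+cx)^{-\frac{n}{c}-k}\ (c\neq0),\qquad p_{n,k}^{[0]}(x)=\frac{(nx)^k}{k!}e^{-nx},$$ let $S_{n,c}(x)=\sum_{k=0}^\infty\big(p_{n,k}^{[c]}(x)\big)^2$ and let $R_{n,c}(x)=-\log S_{n,c}(x)$ (Rényi entropy of order 2). Then: (i) for $c\geq 0$, $R_{n,c}$ is concave and increasing on $[0,+\infty)$; (ii) for every $c\in\mathbb{R}$, $u=R_{n,c}'$ satisfies on $I_c$ the Riccati equation $$x(1+cx)(1+2cx)u'(x)=x(1+cx)(1+2cx)u^2(x)-\big(4(n+c)x(1+cx)+1\big)u(x)+2n(1+2cx).$$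
   Context: For $\alpha\in\mathbb{R}$ and $k\in\mathbb{N}$, $\binom{\alpha}{k}=\frac{\alpha(\alpha-1)\cdots(\alpha-k+1)}{k!}$ and $\binom{\alpha}{0}=1$. The cases $c=-1,0,1$ give the binomial, Poisson and negative binomial distributions. *)

theory Defs
  imports "HOL-Analysis.Analysis"
begin

text \<open>Real power b^e with the conventions needed for the basis functions:
  for b > 0 it is b powr e; for b \<le> 0 and e a nonnegative integer it is the
  ordinary power (so that (1+cx)^(l-k) with 1+cx = 0 is evaluated correctly
  when c < 0, n = -c l); otherwise 0 (such terms only occur multiplied by a
  vanishing binomial coefficient).\<close>
definition rpow :: "real \<Rightarrow> real \<Rightarrow> real" where
  "rpow b e = (if b > 0 then b powr e
               else if e \<in> \<int> \<and> e \<ge> 0 then b ^ nat \<lfloor>e\<rfloor> else 0)"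

definition Icset :: "real \<Rightarrow> real set" where
  "Icset c = (if c < 0 then {0 .. -1/c} else {0..})"

definition pnk :: "real \<Rightarrow> real \<Rightarrow> nat \<Rightarrow> real \<Rightarrow> real" where
  "pnk c n k x =
     (if c = 0 then (n * x) ^ k / fact k * exp (- n * x)
      else (-1) ^ k * ((- n / c) gchoose k) * (c * x) ^ k * rpow (1 + c * x) (- n / c - real k))"

definition Snc :: "real \<Rightarrow> real \<Rightarrow> real \<Rightarrow> real" where
  "Snc c n x = (\<Sum>k. (pnk c n k x)\<^sup>2)"

definition Rnc :: "real \<Rightarrow> real \<Rightarrow> real \<Rightarrow> real" where
  "Rnc c n x = - ln (Snc c n x)"

end

theory Submission
  imports Defs
begin

lemma quadB_neg:
  fixes x c n :: real
  assumes "x > 0" "c \<ge> 0" "n > c"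
  defines "P \<equiv> x*(1+c*x)*(1+2*c*x)"
  defines "Q \<equiv> 4*(n+c)*x*(1+c*x)+1"
  defines "R \<equiv> 2*n*(1+2*c*x)"
  defines "A \<equiv> 1 + 6*c*x + (8*(n+c)*c + 6*c^2)*x^2 + 16*(n+c)*c^2*x^3 + 8*(n+c)*c^3*x^4"
  defines "B \<equiv> 2*n + 12*n*c*x + 24*n*c^2*x^2 + 16*n*c^3*x^3"
  shows "P*B^2 - Q*A*B + R*A^2 < 0"
proof -
  define d where "d = n - c"
  have dn: "n = c + d" and "d > 0" using assms by (auto simp: d_def)
  have e: "P*B^2 - Q*A*B + R*A^2 = - (4*x*d^2 + 12*x*c*d + 8*x*c^2 + 28*x^2*c*d^2 + 108*x^2*c^2*d + 80*x^2*c^3 + 64*x^3*c*d^3 + 264*x^3*c^2*d^2 + 632*x^3*c^3*d + 432*x^3*c^4 + 448*x^4*c^2*d^3 + 1424*x^4*c^3*d^2 + 2472*x^4*c^4*d + 1496*x^4*c^5 + 1344*x^5*c^3*d^3 + 4064*x^5*c^4*d^2 + 6096*x^5*c^5*d + 3376*x^5*c^6 + 2240*x^6*c^4*d^3 + 6720*x^6*c^5*d^2 + 9408*x^6*c^6*d + 4928*x^6*c^7 + 2176*x^7*c^5*d^3 + 6528*x^7*c^6*d^2 + 8832*x^7*c^7*d + 4480*x^7*c^8 + 1152*x^8*c^6*d^3 + 3456*x^8*c^7*d^2 + 4608*x^8*c^8*d + 2304*x^8*c^9 + 256*x^9*c^7*d^3 + 768*x^9*c^8*d^2 + 1024*x^9*c^9*d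 + 512*x^9*c^10)"
    unfolding P_def Q_def R_def A_def B_def dn by algebra
  have "0 < 4*x*d^2" using assms \<open>d>0\<close> by simp
  moreover have "0 \<le> 12*x*c*d + 8*x*c^2 + 28*x^2*c*d^2 + 108*x^2*c^2*d + 80*x^2*c^3 + 64*x^3*c*d^3 + 264*x^3*c^2*d^2 + 632*x^3*c^3*d + 432*x^3*c^4 + 448*x^4*c^2*d^3 + 1424*x^4*c^3*d^2 + 2472*x^4*c^4*d + 1496*x^4*c^5 + 1344*x^5*c^3*d^3 + 4064*x^5*c^4*d^2 + 6096*x^5*c^5*d + 3376*x^5*c^6 + 2240*x^6*c^4*d^3 + 6720*x^6*c^5*d^2 + 9408*x^6*c^6*d + 4928*x^6*c^7 + 2176*x^7*c^5*d^3 + 6528*x^7*c^6*d^2 + 8832*x^7*c^7*d + 4480*x^7*c^8 + 1152*x^8*c^6*d^3 + 3456*x^8*c^7*d^2 + 4608*x^8*c^8*d + 2304*x^8*c^9 + 256*x^9*c^7*d^3 + 768*x^9*c^8*d^2 + 1024*x^9*c^9*d + 512*x^9*c^10"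
    using assms \<open>d>0\<close> by (intro add_nonneg_nonneg mult_nonneg_nonneg) auto
  ultimately show ?thesis unfolding e by linarith
qed

lemma quad_convex_lt:
  fixes P Q R u b g :: real
  assumes "P > 0" "P*u^2 - Q*u + R = 0" "P*b^2 - Q*b + R < 0" "P*g^2 - Q*g + R < 0" "u < g"
  shows "u < b"
proof (rule ccontr)
  assume "\<not> u < b"
  hence bu: "b \<le> u" by simp
  define l where "l = (g - u)/(g - b)"
  have gb: "g - b > 0" using bu assms by simp
  have l0: "0 < l" "l \<le> 1" using bu assms gb by (auto simp: l_def field_simps)
  have "l*(g-b) = g - u" using gb by (simp add: l_def)
  hence ueq: "u = l*b + (1-l)*g" by (simp add: algebra_simps)
  have "P*u^2 - Q*u + R = l*(P*b^2 - Q*b + R) + (1-l)*(P*g^2 - Q*g + R) - P*l*(1-l)*(b-g)^2"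
    unfolding ueq by (simp add: algebra_simps power2_eq_square)
  moreover have "l*(P*b^2 - Q*b + R) < 0" using l0 assms by (simp add: mult_pos_neg)
  moreover have "(1-l)*(P*g^2 - Q*g + R) \<le> 0" using l0 assms by (simp add: mult_nonneg_nonpos)
  moreover have "P*l*(1-l)*(b-g)^2 \<ge> 0" using l0 assms by simp
  ultimately show False using assms by linarith
qed

lemma quad_g:
  fixes c n x s :: real
  assumes "1 + 2*c*x = s" "s \<noteq> 0"
  shows "x*(1+c*x)*(1+2*c*x)*(2*n/s)^2 - (4*(n+c)*x*(1+c*x)+1)*(2*n/s) + 2*n*(1+2*c*x) = -4*n^2*x*(1+c*x)/s"
  using assms
  apply (simp add: field_simps power2_eq_square)
  apply (subgoal_tac "s = 1 + 2*c*x")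
   apply (simp add: algebra_simps)
  by simp

lemma aux_div: "(s::real) > 0 \<Longrightarrow> s * v = - a/s \<Longrightarrow> v = -a/s^2"
  by (simp add: field_simps power2_eq_square)

lemma aux2: "(s::real) > 0 \<Longrightarrow> n > c \<Longrightarrow> n > 0 \<Longrightarrow> -4*n*c/s^2 - (-(4*n^2)/s^2) > 0"
proof -
  assume a: "s > 0" "n > c" "n > 0"
  have "-4*n*c/s^2 - (-(4*n^2)/s^2) = 4*n*(n-c)/s^2" using a by (simp add: field_simps power2_eq_square)
  also have "\<dots> > 0" using a by simp
  finally show ?thesis .
qed

lemma barrier:
  fixes u v :: "real \<Rightarrow> real" and c n :: real
  assumes c: "c \<ge> 0" "n > c"
    and du: "\<And>x. x \<ge> 0 \<Longrightarrow> (u has_real_derivative v x) (at x)"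
    and cv: "\<And>x. x \<ge> 0 \<Longrightarrow> isCont v x"
    and ric: "\<And>x. x > 0 \<Longrightarrow> x*(1+c*x)*(1+2*c*x) * v x = x*(1+c*x)*(1+2*c*x) * (u x)^2 - (4*(n+c)*x*(1+c*x)+1) * u x + 2*n*(1+2*c*x)"
    and u0: "u 0 = 2*n" and v0: "v 0 = -2*n*(n+c)"
  shows "\<forall>x\<ge>0. v x < 0 \<and> u x > 0"
proof -
  have n0: "n > 0" using c by simp
  have cx: "1 + c*x > 0 \<and> 1 + 2*c*x > 0" if "x \<ge> 0" for x
    using c that by (smt (verit) mult_nonneg_nonneg)
  define P where "P x = x*(1+c*x)*(1+2*c*x)" for x
  define Q where "Q x = 4*(n+c)*x*(1+c*x)+1" for x
  define R where "R x = 2*n*(1+2*c*x)" for x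
  define P' where "P' x = 1 + 6*c*x + 6*c^2*x^2" for x
  define Q' where "Q' x = 4*(n+c)*(1+2*c*x)" for x
  define R' where "R' x = 4*n*c" for x :: real
  define g where "g x = 2*n/(1+2*c*x)" for x
  define k where "k x = g x - u x" for x
  define h where "h x = P x * (u x)^2 - Q x * u x + R x" for x
  have ric': "P x * v x = h x" if "x > 0" for x using ric[OF that] by (simp add: P_def Q_def R_def h_def)
  have Ppos: "P x > 0" if "x > 0" for x using that c unfolding P_def by (intro mult_pos_pos) (auto intro: add_pos_nonneg)
  have dg: "(g has_real_derivative (-4*n*c/(1+2*c*x)^2)) (at x)" if "x \<ge> 0" for x
  proof -
    have "1+2*c*x > 0" using that c by (simp add: add_pos_nonneg)
    thus ?thesis unfolding g_def
      by (auto intro!: derivative_eq_intros simp: field_simps power2_eq_square)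
  qed
  have dk: "(k has_real_derivative (-4*n*c/(1+2*c*x)^2 - v x)) (at x)" if "x \<ge> 0" for x
    unfolding k_def using dg[OF that] du[OF that] by (rule derivative_intros)
  have dh: "(h has_real_derivative (P' x*(u x)^2 + 2*P x*u x* v x - Q' x*u x - Q x* v x + R' x)) (at x)"
    if "x \<ge> 0" for x
    unfolding h_def P_def Q_def R_def P'_def Q'_def R'_def
    by (rule derivative_eq_intros du[OF that] refl | simp)+ (simp add: algebra_simps power2_eq_square)
  have ck: "isCont k x" if "x \<ge> 0" for x using dk[OF that] by (rule DERIV_isCont)
  have ch: "isCont h x" if "x \<ge> 0" for x using dh[OF that] by (rule DERIV_isCont)
  have "k 0 = 0" using u0 by (simp add: k_def g_def)
  have "-4*n*c/(1+2*c*0)^2 - v 0 = 2*n*(n-c)" using v0 by (simp add: algebra_simps)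
  hence "-4*n*c/(1+2*c*0)^2 - v 0 > 0" using c n0 by simp
  from has_real_derivative_pos_inc_right[OF dk[of 0] this]
  obtain d1 where d1: "d1 > 0" "\<And>t. t > 0 \<Longrightarrow> t < d1 \<Longrightarrow> k t > 0"
    using \<open>k 0 = 0\<close> by force
  have "v 0 < 0" using v0 n0 c by (simp add: mult_pos_pos)
  hence "eventually (\<lambda>t. v t < 0) (at 0)"
    using cv[of 0] unfolding isCont_def by (intro order_tendstoD(2)) auto
  then obtain d2 where d2: "d2 > 0" "\<And>t. t \<noteq> 0 \<Longrightarrow> dist t 0 < d2 \<Longrightarrow> v t < 0"
    unfolding eventually_at by auto
  define \<delta> where "\<delta> = min d1 d2 / 2"
  have \<delta>: "\<delta> > 0" using d1 d2 by (simp add: \<delta>_def)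
  have near: "k t > 0 \<and> v t < 0" if "0 < t" "t \<le> \<delta>" for t
    using that d1 d2 by (auto simp: \<delta>_def dist_real_def)
  define E where "E = {t \<in> {\<delta>..}. k t \<le> 0} \<union> {t \<in> {\<delta>..}. 0 \<le> v t}"
  have "E = {}"
  proof (rule ccontr)
    assume "E \<noteq> {}"
    have cE: "continuous_on {\<delta>..} k" "continuous_on {\<delta>..} v" "continuous_on {\<delta>..} (\<lambda>_. 0::real)"
      using ck cv \<delta> by (auto intro!: continuous_at_imp_continuous_on)
    have "closed E" unfolding E_def
      by (intro closed_Un continuous_on_closed_Collect_le cE) auto
    moreover have "bdd_below E" unfolding E_def by (auto intro!: bdd_belowI[of _ \<delta>])
    ultimately have x0E: "Inf E \<in> E" using \<open>E \<noteq> {}\<close> by (intro closed_contains_Inf) auto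
    define x0 where "x0 = Inf E"
    have x0d: "x0 \<ge> \<delta>" using x0E by (auto simp: x0_def E_def)
    have x0p: "x0 > 0" using x0d \<delta> by simp
    have left: "k t > 0 \<and> v t < 0" if "0 < t" "t < x0" for t
    proof (cases "t \<le> \<delta>")
      case True thus ?thesis using near that by simp
    next
      case False
      have "t \<notin> E"
      proof
        assume "t \<in> E"
        hence "x0 \<le> t" unfolding x0_def using \<open>bdd_below E\<close> by (rule cInf_lower)
        thus False using that by simp
      qed
      thus ?thesis using False unfolding E_def by auto
    qed
    have evl: "eventually (\<lambda>t. k t > 0 \<and> v t < 0) (at_left x0)"
      using eventually_at_left_real[OF x0p] by eventually_elim (use left in auto)
    have tk: "(k \<longlongrightarrow> k x0) (at_left x0)"
      using ck[of x0] x0p unfolding isCont_def by (auto intro: tendsto_mono[OF at_le])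
    have th: "(h \<longlongrightarrow> h x0) (at_left x0)"
      using ch[of x0] x0p unfolding isCont_def by (auto intro: tendsto_mono[OF at_le])
    have kx0: "k x0 \<ge> 0"
      by (rule tendsto_lowerbound[OF tk]) (use evl in \<open>auto elim: eventually_mono\<close>)
    have "eventually (\<lambda>t. h t \<le> 0) (at_left x0)"
      using evl eventually_at_left_real[OF x0p]
    proof eventually_elim
      case (elim t)
      hence "t > 0" "v t < 0" by auto
      thus ?case using ric'[of t] Ppos[of t] by (metis less_eq_real_def mult_pos_neg)
    qed
    hence hx0: "h x0 \<le> 0" by (intro tendsto_upperbound[OF th]) auto
    let ?s = "1+2*c*x0"
    have spos: "?s > 0" using c x0p by (simp add: add_pos_nonneg)
    show False
    proof (cases "k x0 \<le> 0")
      case True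
      hence ug: "u x0 = g x0" using kx0 by (simp add: k_def)
      have "P x0 * v x0 = - 4*n^2*x0*(1+c*x0)/?s"
        using ric'[OF x0p] quad_g[of c x0 ?s n] spos unfolding h_def ug g_def P_def Q_def R_def
        by simp
      hence "x0*(1+c*x0)* (?s * v x0) = x0*(1+c*x0) * (- 4*n^2/?s)" unfolding P_def
        using spos by (simp add: field_simps)
      moreover have "x0*(1+c*x0) \<noteq> 0" using x0p cx[of x0] by simp
      ultimately have "?s * v x0 = - 4*n^2/?s" by (metis mult_left_cancel)
      hence vx0: "v x0 = -(4*n^2)/?s^2" using aux_div[OF spos] by simp
      have "-4*n*c/?s^2 - v x0 > 0" unfolding vx0 using spos c(2) n0 by (rule aux2)
      from has_real_derivative_pos_inc_left[OF dk[of x0] this] x0p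
      obtain d where d: "d > 0" "\<And>t. t > 0 \<Longrightarrow> t < d \<Longrightarrow> k (x0 - t) < k x0" by force
      define t where "t = min d x0 / 2"
      have t: "t > 0" "t < d" "t < x0" using d(1) x0p by (auto simp: t_def)
      have "k (x0 - t) < 0" using d(2)[OF t(1,2)] True by simp
      moreover have "k (x0 - t) > 0" using left[of "x0 - t"] t by simp
      ultimately show False by simp
    next
      case False
      hence kpos: "k x0 > 0" by simp
      have "x0 \<in> E" using x0E by (simp add: x0_def)
      hence "0 \<le> v x0" using kpos unfolding E_def by auto
      hence "h x0 \<ge> 0" using ric'[OF x0p] Ppos[OF x0p] by (metis mult_nonneg_nonneg less_imp_le)
      hence h0: "h x0 = 0" using hx0 by simp
      hence vz: "v x0 = 0" using ric'[OF x0p] Ppos[OF x0p] by simp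
      define A where "A = 1 + 6*c*x0 + (8*(n+c)*c + 6*c^2)*x0^2 + 16*(n+c)*c^2*x0^3 + 8*(n+c)*c^3*x0^4"
      define B where "B = 2*n + 12*n*c*x0 + 24*n*c^2*x0^2 + 16*n*c^3*x0^3"
      have Apos: "A > 0" unfolding A_def using c x0p
        by (intro add_pos_nonneg mult_nonneg_nonneg) auto
      have "P x0 * B^2 - Q x0 * A * B + R x0 * A^2 < 0"
        using quadB_neg[OF x0p c] unfolding A_def B_def P_def Q_def R_def by simp
      hence qB: "P x0 * (B/A)^2 - Q x0 * (B/A) + R x0 < 0"
      proof -
        assume a: "P x0 * B^2 - Q x0 * A * B + R x0 * A^2 < 0"
        have "P x0 * (B/A)^2 - Q x0 * (B/A) + R x0 = (P x0 * B^2 - Q x0 * A * B + R x0 * A^2)/A^2"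
          using Apos by (simp add: field_simps power2_eq_square)
        also have "\<dots> < 0" using a Apos by (simp add: divide_neg_pos)
        finally show ?thesis .
      qed
      have "P x0 * (g x0)^2 - Q x0 * g x0 + R x0 = -4*n^2*x0*(1+c*x0)/?s"
        using quad_g[of c x0 ?s n] spos unfolding g_def P_def Q_def R_def by simp
      also have "\<dots> < 0" using spos x0p cx[of x0] n0 by (simp add: divide_neg_pos)
      finally have qg: "P x0 * (g x0)^2 - Q x0 * g x0 + R x0 < 0" .
      have hu: "P x0 * (u x0)^2 - Q x0 * u x0 + R x0 = 0" using h0 by (simp add: h_def)
      have "u x0 < g x0" using kpos by (simp add: k_def)
      from quad_convex_lt[OF Ppos[OF x0p] hu qB qg this]
      have "u x0 < B/A" .
      hence AuB: "A * u x0 - B < 0" using Apos by (simp add: field_simps)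
      have "A = P' x0 * Q x0 - P x0 * Q' x0" unfolding A_def P_def P'_def Q_def Q'_def by algebra
      moreover have "B = P' x0 * R x0 - P x0 * R' x0" unfolding B_def P_def P'_def R_def R'_def by algebra
      moreover have "P x0 * (P' x0*(u x0)^2 - Q' x0*u x0 + R' x0) = (P' x0 * Q x0 - P x0 * Q' x0) * u x0 - (P' x0 * R x0 - P x0 * R' x0)"
        using hu by algebra
      ultimately have "P x0 * (P' x0*(u x0)^2 - Q' x0*u x0 + R' x0) < 0" using AuB by simp
      hence dneg: "P' x0*(u x0)^2 + 2*P x0*u x0 * v x0 - Q' x0*u x0 - Q x0 * v x0 + R' x0 < 0"
        using Ppos[OF x0p] vz by (simp add: mult_less_0_iff)
      from has_real_derivative_neg_dec_left[OF dh[of x0] dneg] x0p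
      obtain d where d: "d > 0" "\<And>t. t > 0 \<Longrightarrow> t < d \<Longrightarrow> h x0 < h (x0 - t)" by force
      define t where "t = min d x0 / 2"
      have t: "t > 0" "t < d" "t < x0" using d(1) x0p by (auto simp: t_def)
      have "h (x0 - t) > 0" using d(2)[OF t(1,2)] h0 by simp
      moreover have "h (x0 - t) < 0"
      proof -
        have tt: "0 < x0 - t" "x0 - t < x0" using t by auto
        have "v (x0 - t) < 0" using left[OF tt] by simp
        thus ?thesis using ric'[OF tt(1)] Ppos[OF tt(1)] by (metis mult_pos_neg)
      qed
      ultimately show False by simp
    qed
  qed
  have vneg: "v x < 0" if "x \<ge> 0" for x
  proof -
    have "x = 0 \<or> (0 < x \<and> x \<le> \<delta>) \<or> x > \<delta>" using that by auto
    then consider "x = 0" | "0 < x" "x \<le> \<delta>" | "x > \<delta>" by blast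
    thus ?thesis
    proof cases
      case 1 thus ?thesis using \<open>v 0 < 0\<close> by simp
    next
      case 2 thus ?thesis using near by simp
    next
      case 3 hence "x \<notin> E" using \<open>E = {}\<close> by simp
      thus ?thesis using 3 unfolding E_def by auto
    qed
  qed
  show ?thesis
  proof (intro allI impI conjI)
    fix x :: real assume x: "x \<ge> 0"
    show "v x < 0" using vneg[OF x] .
    show "u x > 0"
    proof (cases "x = 0")
      case True thus ?thesis using u0 n0 by simp
    next
      case False
      hence xp: "x > 0" using x by simp
      show ?thesis
      proof (rule ccontr)
        assume "\<not> u x > 0"
        hence "u x \<le> 0" by simp
        moreover have "Q x > 0" unfolding Q_def using xp c cx[of x] by (intro add_nonneg_pos mult_nonneg_nonneg) auto
        ultimately have "- Q x * u x \<ge> 0" by (simp add: mult_le_0_iff)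
        moreover have "P x * (u x)^2 \<ge> 0" using Ppos[OF xp] by simp
        moreover have "R x > 0" unfolding R_def using n0 cx[OF x] by simp
        ultimately have "h x > 0" unfolding h_def by linarith
        moreover have "h x < 0" using ric'[OF xp] Ppos[OF xp] vneg[OF x] by (metis mult_pos_neg)
        ultimately show False by simp
      qed
    qed
  qed
qed

lemma riccati_ode:
  fixes F G H :: "real \<Rightarrow> real" and c n x :: real
  assumes dS: "(F has_real_derivative G x) (at x)"
    and dS1: "(G has_real_derivative H x) (at x)"
    and pos: "F x > 0"
    and ode: "x*(1+c*x)*(1+2*c*x) * H x + (4*(n+c)*x*(1+c*x)+1) * G x + 2*n*(1+2*c*x) * F x = 0"
  shows "((\<lambda>x. - ln (F x)) has_real_derivative (- G x / F x)) (at x)"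
    and "((\<lambda>x. - G x / F x) has_real_derivative (- H x / F x + (G x / F x)^2)) (at x)"
    and "x * (1 + c * x) * (1 + 2 * c * x) * (- H x / F x + (G x / F x)^2)
            = x * (1 + c * x) * (1 + 2 * c * x) * (- G x / F x)\<^sup>2
              - (4 * (n + c) * x * (1 + c * x) + 1) * (- G x / F x) + 2 * n * (1 + 2 * c * x)"
proof -
  show "((\<lambda>x. - ln (F x)) has_real_derivative (- G x / F x)) (at x)"
    using pos by (auto intro!: derivative_eq_intros dS simp: field_simps)
  show "((\<lambda>x. - G x / F x) has_real_derivative (- H x / F x + (G x / F x)^2)) (at x)"
    using pos by (auto intro!: derivative_eq_intros dS dS1 simp: field_simps power2_eq_square)
  have diff: "x * (1 + c * x) * (1 + 2 * c * x) * (- H x / F x + (G x / F x)^2)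
        - (x * (1 + c * x) * (1 + 2 * c * x) * (- G x / F x)\<^sup>2
              - (4 * (n + c) * x * (1 + c * x) + 1) * (- G x / F x) + 2 * n * (1 + 2 * c * x))
      = - (x*(1+c*x)*(1+2*c*x) * H x + (4*(n+c)*x*(1+c*x)+1) * G x + 2*n*(1+2*c*x) * F x) / F x"
    using pos by (simp add: field_simps power2_eq_square)
  have "x * (1 + c * x) * (1 + 2 * c * x) * (- H x / F x + (G x / F x)^2)
        - (x * (1 + c * x) * (1 + 2 * c * x) * (- G x / F x)\<^sup>2
              - (4 * (n + c) * x * (1 + c * x) + 1) * (- G x / F x) + 2 * n * (1 + 2 * c * x)) = 0"
    unfolding diff ode by simp
  thus "x * (1 + c * x) * (1 + 2 * c * x) * (- H x / F x + (G x / F x)^2)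
            = x * (1 + c * x) * (1 + 2 * c * x) * (- G x / F x)\<^sup>2
              - (4 * (n + c) * x * (1 + c * x) + 1) * (- G x / F x) + 2 * n * (1 + 2 * c * x)"
    by simp
qed

lemma assemble:
  fixes c n :: real and U :: "real set" and S S1 S2 :: "real \<Rightarrow> real"
  assumes U: "open U" "Icset c \<subseteq> U" 
    and eq: "\<And>x. x \<in> U \<Longrightarrow> Snc c n x = S x"
    and d1: "\<And>x. x \<in> U \<Longrightarrow> (S has_real_derivative S1 x) (at x)"
    and d2: "\<And>x. x \<in> U \<Longrightarrow> (S1 has_real_derivative S2 x) (at x)"
    and pos: "\<And>x. x \<in> Icset c \<Longrightarrow> S x > 0"
    and ode: "\<And>x. x \<in> Icset c \<Longrightarrow> x*(1+c*x)*(1+2*c*x) * S2 x + (4*(n+c)*x*(1+c*x)+1) * S1 x + 2*n*(1+2*c*x) * S x = 0"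
    and cont: "\<And>x. c \<ge> 0 \<Longrightarrow> x \<ge> 0 \<Longrightarrow> isCont S2 x"
    and init: "c \<ge> 0 \<Longrightarrow> S 0 = 1 \<and> S1 0 = -2*n \<and> S2 0 = 6*n^2 + 2*n*c"
    and nc: "c \<ge> 0 \<Longrightarrow> n > c"
  shows "(c \<ge> 0 \<longrightarrow> concave_on {0..} (Rnc c n) \<and> strict_mono_on {0..} (Rnc c n))
    \<and> (\<exists>u u' :: real \<Rightarrow> real. \<forall>x \<in> Icset c.
          (Rnc c n has_real_derivative u x) (at x within Icset c)
        \<and> (u has_real_derivative u' x) (at x within Icset c)
        \<and> x * (1 + c * x) * (1 + 2 * c * x) * u' x
            = x * (1 + c * x) * (1 + 2 * c * x) * (u x)\<^sup>2
              - (4 * (n + c) * x * (1 + c * x) + 1) * u x + 2 * n * (1 + 2 * c * x))"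
proof -
  define u where "u x = - S1 x / S x" for x
  define u' where "u' x = - S2 x / S x + (S1 x / S x)^2" for x
  have R: "(Rnc c n has_real_derivative u x) (at x)"
    and U': "(u has_real_derivative u' x) (at x)"
    and ric: "x * (1 + c * x) * (1 + 2 * c * x) * u' x
            = x * (1 + c * x) * (1 + 2 * c * x) * (u x)\<^sup>2
              - (4 * (n + c) * x * (1 + c * x) + 1) * u x + 2 * n * (1 + 2 * c * x)"
    if x: "x \<in> Icset c" for x
  proof -
    have xU: "x \<in> U" using x U by auto
    note r = riccati_ode[where F=S and G=S1 and H=S2 and x=x and c=c and n=n, OF d1[OF xU] d2[OF xU] pos[OF x] ode[OF x]]
    show "(Rnc c n has_real_derivative u x) (at x)"
      using has_field_derivative_transform_within_open[OF r(1) U(1) xU] eq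
      unfolding u_def Rnc_def by auto
    show "(u has_real_derivative u' x) (at x)" using r(2) unfolding u_def u'_def by (simp add: fun_eq_iff)
    show "x * (1 + c * x) * (1 + 2 * c * x) * u' x
            = x * (1 + c * x) * (1 + 2 * c * x) * (u x)\<^sup>2
              - (4 * (n + c) * x * (1 + c * x) + 1) * u x + 2 * n * (1 + 2 * c * x)"
      using r(3) unfolding u_def u'_def .
  qed
  have part2: "\<exists>u u' :: real \<Rightarrow> real. \<forall>x \<in> Icset c.
          (Rnc c n has_real_derivative u x) (at x within Icset c)
        \<and> (u has_real_derivative u' x) (at x within Icset c)
        \<and> x * (1 + c * x) * (1 + 2 * c * x) * u' x
            = x * (1 + c * x) * (1 + 2 * c * x) * (u x)\<^sup>2
              - (4 * (n + c) * x * (1 + c * x) + 1) * u x + 2 * n * (1 + 2 * c * x)"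
    using R U' ric by (intro exI[of _ u] exI[of _ u']) (blast intro: has_field_derivative_at_within)
  have part1: "concave_on {0..} (Rnc c n) \<and> strict_mono_on {0..} (Rnc c n)" if c: "c \<ge> 0"
  proof -
    have I: "Icset c = {0..}" using c by (simp add: Icset_def)
    have xI: "x \<in> Icset c" if "x \<ge> 0" for x using that I by simp
    have ic: "isCont u' x" if "x \<ge> 0" for x
    proof -
      have xU: "x \<in> U" using xI[OF that] U by auto
      have "isCont S x" "isCont S1 x" using d1[OF xU] d2[OF xU] by (auto intro: DERIV_isCont)
      moreover have "S x \<noteq> 0" using pos[OF xI[OF that]] by simp
      ultimately show ?thesis unfolding u'_def using cont[OF c that]
        by (auto intro!: continuous_intros)
    qed
    have i: "S 0 = 1" "S1 0 = -2*n" "S2 0 = 6*n^2 + 2*n*c" using init[OF c] by auto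
    have B: "\<forall>x\<ge>0. u' x < 0 \<and> u x > 0"
    proof (rule barrier[OF c nc[OF c]])
      show "\<And>x. x \<ge> 0 \<Longrightarrow> (u has_real_derivative u' x) (at x)" using U' xI by blast
      show "\<And>x. x \<ge> 0 \<Longrightarrow> isCont u' x" using ic .
      show "\<And>x. x > 0 \<Longrightarrow> x*(1+c*x)*(1+2*c*x) * u' x = x*(1+c*x)*(1+2*c*x) * (u x)^2 - (4*(n+c)*x*(1+c*x)+1) * u x + 2*n*(1+2*c*x)"
        using ric xI by simp
      show "u 0 = 2*n" using i by (simp add: u_def)
      show "u' 0 = -2*n*(n+c)" using i by (simp add: u'_def power2_eq_square algebra_simps)
    qed
    have "strict_mono_on {0..} (Rnc c n)"
    proof (rule strict_mono_onI)
      fix r s :: real assume rs: "r \<in> {0..}" "s \<in> {0..}" "r < s"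
      show "Rnc c n r < Rnc c n s"
      proof (rule DERIV_pos_imp_increasing[OF rs(3)])
        fix t assume "r \<le> t" "t \<le> s"
        hence t: "t \<ge> 0" using rs by simp
        show "\<exists>y. DERIV (Rnc c n) t :> y \<and> y > 0" using R[OF xI[OF t]] B t by blast
      qed
    qed
    moreover have "concave_on {0..} (Rnc c n)"
      unfolding concave_on_def
    proof (rule convex_on_realI[where f' = "\<lambda>x. - u x"])
      show "connected {0::real..}" by simp
      show "\<And>x. x \<in> {0..} \<Longrightarrow> ((\<lambda>x. - Rnc c n x) has_real_derivative - u x) (at x)"
        using R xI by (auto intro!: derivative_intros)
      fix x y :: real assume "x \<in> {0..}" "y \<in> {0..}" "x \<le> y"
      hence "u y \<le> u x"
      proof (intro DERIV_nonpos_imp_nonincreasing[OF \<open>x \<le> y\<close>])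
        fix t assume "x \<le> t" "t \<le> y"
        hence t: "t \<ge> 0" using \<open>x \<in> {0..}\<close> by simp
        show "\<exists>z. DERIV u t :> z \<and> z \<le> 0" using U'[OF xI[OF t]] B t by (blast intro: less_imp_le)
      qed
      thus "- u x \<le> - u y" by simp
    qed
    ultimately show ?thesis by simp
  qed
  show ?thesis using part1 part2 by blast
qed

definition Bc :: "real \<Rightarrow> nat \<Rightarrow> real" where
  "Bc a k = ((-a) gchoose k)^2"

definition Fa :: "real \<Rightarrow> real fps" where
  "Fa a = Abs_fps (Bc a)"

lemma Bc_rec: "of_nat (Suc k)^2 * Bc a (Suc k) = (of_nat k + a)^2 * Bc a k"
proof -
  have "(-a) gchoose (Suc k) = ((-a) gchoose k) * ((-a - of_nat k) / (of_nat k + 1))"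
    by (rule gbinomial_Suc_rec)
  hence "of_nat (Suc k) * ((-a) gchoose (Suc k)) = - ((-a) gchoose k) * (of_nat k + a)"
    by (simp add: field_simps)
  hence "(of_nat (Suc k) * ((-a) gchoose (Suc k)))^2 = (((-a) gchoose k) * (of_nat k + a))^2"
    by (simp add: power2_eq_square)
  thus ?thesis by (simp add: Bc_def power_mult_distrib mult_ac)
qed

lemma Fa_ode:
  "fps_X * fps_deriv (fps_deriv (Fa a)) - fps_X^2 * fps_deriv (fps_deriv (Fa a)) + fps_deriv (Fa a)
     - fps_const (2*a+1) * (fps_X * fps_deriv (Fa a)) - fps_const (a^2) * Fa a = 0"
proof (rule fps_ext)
  fix k :: nat
  have r: "of_nat (Suc k)^2 * Bc a (Suc k) = (of_nat k + a)^2 * Bc a k" by (rule Bc_rec)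
  show "fps_nth (fps_X * fps_deriv (fps_deriv (Fa a)) - fps_X^2 * fps_deriv (fps_deriv (Fa a)) + fps_deriv (Fa a)
     - fps_const (2*a+1) * (fps_X * fps_deriv (Fa a)) - fps_const (a^2) * Fa a) k = fps_nth 0 k"
  proof (cases k)
    case 0 thus ?thesis using r by (simp add: Fa_def fps_X_power_mult_nth power2_eq_square)
  next
    case (Suc m)
    show ?thesis
    proof (cases m)
      case 0 thus ?thesis using r Suc by (simp add: Fa_def fps_X_power_mult_nth power2_eq_square algebra_simps)
    next
      case (Suc j)
      thus ?thesis using r \<open>k = Suc m\<close> by (simp add: Fa_def fps_X_power_mult_nth power2_eq_square algebra_simps)
    qed
  qed
qed


lemma rad_add: "ereal \<bar>z\<bar> < fps_conv_radius f \<Longrightarrow> ereal \<bar>z\<bar> < fps_conv_radius g \<Longrightarrow> ereal \<bar>z\<bar> < fps_conv_radius (f + g)"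
  for f g :: "real fps"
  using fps_conv_radius_add[of f g] by (auto simp: min_def split: if_splits)
lemma rad_diff: "ereal \<bar>z\<bar> < fps_conv_radius f \<Longrightarrow> ereal \<bar>z\<bar> < fps_conv_radius g \<Longrightarrow> ereal \<bar>z\<bar> < fps_conv_radius (f - g)"
  for f g :: "real fps"
  using fps_conv_radius_diff[of f g] by (auto simp: min_def split: if_splits)
lemma rad_mult: "ereal \<bar>z\<bar> < fps_conv_radius f \<Longrightarrow> ereal \<bar>z\<bar> < fps_conv_radius g \<Longrightarrow> ereal \<bar>z\<bar> < fps_conv_radius (f * g)"
  for f g :: "real fps"
  using fps_conv_radius_mult[of f g] by (auto simp: min_def split: if_splits)
lemma rad_deriv: "ereal \<bar>z\<bar> < fps_conv_radius f \<Longrightarrow> ereal \<bar>z\<bar> < fps_conv_radius (fps_deriv f)"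
  for f :: "real fps"
  using fps_conv_radius_deriv[of f] by (auto intro: less_le_trans)
lemma rad_X: "ereal \<bar>z\<bar> < fps_conv_radius (fps_X :: real fps)" by simp
lemma rad_X2: "ereal \<bar>z\<bar> < fps_conv_radius (fps_X^2 :: real fps)" by simp
lemma rad_const: "ereal \<bar>z\<bar> < fps_conv_radius (fps_const c :: real fps)" by simp

lemma Fa_eval_ode:
  fixes z :: real
  assumes "norm z < fps_conv_radius (Fa a)"
  shows "z*(1-z) * eval_fps (fps_deriv (fps_deriv (Fa a))) z + (1 - (2*a+1)*z) * eval_fps (fps_deriv (Fa a)) z
          - a^2 * eval_fps (Fa a) z = 0"
proof -
  have a: "ereal \<bar>z\<bar> < fps_conv_radius (Fa a)" using assms by simp
  note rads = a rad_deriv[OF a] rad_deriv[OF rad_deriv[OF a]] rad_X rad_X2 rad_const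
  have "eval_fps (fps_X * fps_deriv (fps_deriv (Fa a)) - fps_X^2 * fps_deriv (fps_deriv (Fa a)) + fps_deriv (Fa a)
     - fps_const (2*a+1) * (fps_X * fps_deriv (Fa a)) - fps_const (a^2) * Fa a) z = 0"
    by (simp only: Fa_ode eval_fps_0)
  also have "eval_fps (fps_X * fps_deriv (fps_deriv (Fa a)) - fps_X^2 * fps_deriv (fps_deriv (Fa a)) + fps_deriv (Fa a)
     - fps_const (2*a+1) * (fps_X * fps_deriv (Fa a)) - fps_const (a^2) * Fa a) z
     = z * eval_fps (fps_deriv (fps_deriv (Fa a))) z - z^2 * eval_fps (fps_deriv (fps_deriv (Fa a))) z
       + eval_fps (fps_deriv (Fa a)) z - (2*a+1) * (z * eval_fps (fps_deriv (Fa a)) z) - a^2 * eval_fps (Fa a) z"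
    by (simp add: eval_fps_add eval_fps_diff eval_fps_mult rads rad_add rad_diff rad_mult eval_fps_power)
  finally show ?thesis by (simp add: algebra_simps power2_eq_square)
qed


lemma Fa_radius_pos:
  assumes "a > 0"
  shows "fps_conv_radius (Fa a) = 1"
proof -
  have na: "-a \<notin> \<nat>" using assms by (auto elim!: Nats_cases)
  have lim: "(\<lambda>k. ((-a) gchoose k) / ((-a) gchoose Suc k)) \<longlonglongrightarrow> -1"
    by (rule gbinomial_ratio_limit[OF na])
  have "(\<lambda>k. (((-a) gchoose k) / ((-a) gchoose Suc k))^2) \<longlonglongrightarrow> (-1)^2"
    by (intro tendsto_intros lim)
  hence "(\<lambda>k. norm (Bc a k) / norm (Bc a (Suc k))) \<longlonglongrightarrow> 1"
    by (simp add: Bc_def power_divide)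
  hence "conv_radius (Bc a) = 1"
    by (intro conv_radius_ratio_limit_nonzero[of _ 1]) simp_all
  thus ?thesis by (simp add: fps_conv_radius_def Fa_def)
qed

lemma Fa_radius_nat: "fps_conv_radius (Fa (- of_nat l)) = \<infinity>"
proof -
  have "eventually (\<lambda>k. Bc (- of_nat l) k = 0) sequentially"
    using eventually_gt_at_top[of l]
    by eventually_elim (simp add: Bc_def binomial_gbinomial[symmetric])
  hence "conv_radius (Bc (- of_nat l)) = conv_radius (\<lambda>_. 0::real)"
    by (rule conv_radius_cong')
  thus ?thesis by (simp add: fps_conv_radius_def Fa_def)
qed

lemma Bc_nonneg: "Bc a k \<ge> 0" by (simp add: Bc_def)

lemma Fa_ge1:
  assumes "z \<ge> 0" "norm z < fps_conv_radius (Fa a)"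
  shows "eval_fps (Fa a) z \<ge> 1"
proof -
  have s: "summable (\<lambda>k. fps_nth (Fa a) k * z^k)" by (rule summable_fps[OF assms(2)])
  have "(\<Sum>k\<in>{0}. fps_nth (Fa a) k * z^k) \<le> (\<Sum>k. fps_nth (Fa a) k * z^k)"
    by (rule sum_le_suminf[OF s]) (use assms in \<open>auto simp: Fa_def Bc_nonneg\<close>)
  thus ?thesis by (simp add: eval_fps_def Fa_def Bc_def)
qed

definition gcoef :: "real \<Rightarrow> nat \<Rightarrow> real" where
  "gcoef n k = (n^2)^k / (fact k)^2"

definition Gn :: "real \<Rightarrow> real fps" where
  "Gn n = Abs_fps (gcoef n)"

lemma Gn_ode:
  "fps_X * fps_deriv (fps_deriv (Gn n)) + fps_deriv (Gn n) - fps_const (n^2) * Gn n = 0"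
proof (rule fps_ext)
  fix k :: nat
  have f: "(fact (Suc k)::real)^2 = of_nat (Suc k)^2 * (fact k)^2"
    by (simp only: fact_Suc of_nat_mult power_mult_distrib)
  have nz: "(of_nat (Suc k)::real)^2 \<noteq> 0" by simp
  have r: "of_nat (Suc k)^2 * gcoef n (Suc k) = n^2 * gcoef n k"
    unfolding gcoef_def f using nz by (simp del: of_nat_Suc)
  show "fps_nth (fps_X * fps_deriv (fps_deriv (Gn n)) + fps_deriv (Gn n) - fps_const (n^2) * Gn n) k = fps_nth 0 k"
  proof (cases k)
    case 0 thus ?thesis using r by (simp add: Gn_def power2_eq_square)
  next
    case (Suc m)
    thus ?thesis using r by (simp add: Gn_def power2_eq_square algebra_simps)
  qed
qed

lemma Gn_radius: "fps_conv_radius (Gn n) = \<infinity>"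
proof -
  have "conv_radius (gcoef n) = \<infinity>"
  proof (rule conv_radius_inftyI'')
    fix z :: real
    show "summable (\<lambda>k. gcoef n k * z^k)" unfolding gcoef_def
    proof (rule summable_comparison_test'[where N=0])
      show "summable (\<lambda>k. inverse (fact k) * (n^2 * \<bar>z\<bar>)^k)" by (rule summable_exp)
      fix k :: nat
      have f: "(fact k :: real) \<ge> 1" by simp
      have "norm ((n^2)^k / (fact k)^2 * z^k) = (n^2 * \<bar>z\<bar>)^k / (fact k)^2"
        by (simp add: abs_mult power_abs power_mult_distrib)
      also have "\<dots> \<le> (n^2 * \<bar>z\<bar>)^k / fact k"
        using f by (intro divide_left_mono) (auto simp: power2_eq_square)
      finally show "norm ((n^2)^k / (fact k)^2 * z^k) \<le> inverse (fact k) * (n^2 * \<bar>z\<bar>)^k"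
        by (simp add: field_simps)
    qed
  qed
  thus ?thesis by (simp add: fps_conv_radius_def Gn_def)
qed

lemma Gn_eval_ode:
  fixes z :: real
  shows "z * eval_fps (fps_deriv (fps_deriv (Gn n))) z + eval_fps (fps_deriv (Gn n)) z
          - n^2 * eval_fps (Gn n) z = 0"
proof -
  have a: "ereal \<bar>z\<bar> < fps_conv_radius (Gn n)" by (simp add: Gn_radius)
  note rads = a rad_deriv[OF a] rad_deriv[OF rad_deriv[OF a]] rad_X rad_X2 rad_const
  have "eval_fps (fps_X * fps_deriv (fps_deriv (Gn n)) + fps_deriv (Gn n) - fps_const (n^2) * Gn n) z = 0"
    by (simp only: Gn_ode eval_fps_0)
  also have "eval_fps (fps_X * fps_deriv (fps_deriv (Gn n)) + fps_deriv (Gn n) - fps_const (n^2) * Gn n) z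
     = z * eval_fps (fps_deriv (fps_deriv (Gn n))) z + eval_fps (fps_deriv (Gn n)) z - n^2 * eval_fps (Gn n) z"
    by (simp add: eval_fps_add eval_fps_diff eval_fps_mult rads rad_add rad_diff rad_mult)
  finally show ?thesis .
qed

lemma Gn_ge1:
  assumes "z \<ge> 0"
  shows "eval_fps (Gn n) z \<ge> 1"
proof -
  have s: "summable (\<lambda>k. fps_nth (Gn n) k * z^k)" by (rule summable_fps) (simp add: Gn_radius)
  have "(\<Sum>k\<in>{0}. fps_nth (Gn n) k * z^k) \<le> (\<Sum>k. fps_nth (Gn n) k * z^k)"
    by (rule sum_le_suminf[OF s]) (use assms in \<open>auto simp: Gn_def gcoef_def\<close>)
  thus ?thesis by (simp add: eval_fps_def Gn_def gcoef_def)
qed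

lemma eval_chain2:
  fixes f :: "real fps"
  assumes "fps_conv_radius f = \<infinity>"
  shows "((\<lambda>x. eval_fps f (x^2)) has_real_derivative eval_fps (fps_deriv f) (x^2) * (2*x)) (at x)"
proof -
  have "(eval_fps f has_real_derivative eval_fps (fps_deriv f) (x^2)) (at (x^2))"
    using assms by (intro has_field_derivative_eval_fps) simp
  moreover have "((\<lambda>x. x^2) has_real_derivative 2*x) (at x)" by (auto intro!: derivative_eq_intros)
  ultimately show ?thesis by (rule DERIV_chain2)
qed

lemma Gn_rad1: "fps_conv_radius (fps_deriv (Gn n)) = \<infinity>"
  using fps_conv_radius_deriv[of "Gn n"] by (simp add: Gn_radius)
lemma Gn_rad2: "fps_conv_radius (fps_deriv (fps_deriv (Gn n))) = \<infinity>"
  using fps_conv_radius_deriv[of "fps_deriv (Gn n)"] by (simp add: Gn_rad1)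

lemma Snc_c0: "Snc 0 n x = exp (-2*n*x) * eval_fps (Gn n) (x^2)"
proof -
  have "(\<lambda>k. fps_nth (Gn n) k * (x^2)^k) sums eval_fps (Gn n) (x^2)"
    by (rule sums_eval_fps) (simp add: Gn_radius)
  hence "(\<lambda>k. exp (-2*n*x) * (fps_nth (Gn n) k * (x^2)^k)) sums (exp (-2*n*x) * eval_fps (Gn n) (x^2))"
    by (rule sums_mult)
  moreover have "(pnk 0 n k x)^2 = exp (-2*n*x) * (fps_nth (Gn n) k * (x^2)^k)" for k
  proof -
    have "exp (-2*n*x) = (exp (-n*x))^2" by (simp add: power2_eq_square flip: exp_add)
    thus ?thesis by (simp add: pnk_def Gn_def gcoef_def power_mult_distrib power_divide
        mult.commute flip: power_mult)
  qed
  ultimately show ?thesis unfolding Snc_def by (simp add: sums_iff)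
qed


lemma case_c0:
  fixes n :: real
  assumes n: "n > 0"
  shows "(0 \<ge> (0::real) \<longrightarrow> concave_on {0..} (Rnc 0 n) \<and> strict_mono_on {0..} (Rnc 0 n))
    \<and> (\<exists>u u' :: real \<Rightarrow> real. \<forall>x \<in> Icset 0.
          (Rnc 0 n has_real_derivative u x) (at x within Icset 0)
        \<and> (u has_real_derivative u' x) (at x within Icset 0)
        \<and> x * (1 + 0 * x) * (1 + 2 * 0 * x) * u' x
            = x * (1 + 0 * x) * (1 + 2 * 0 * x) * (u x)\<^sup>2
              - (4 * (n + 0) * x * (1 + 0 * x) + 1) * u x + 2 * n * (1 + 2 * 0 * x))"
proof -
  define G0 where "G0 = eval_fps (Gn n)"
  define G1 where "G1 = eval_fps (fps_deriv (Gn n))"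
  define G2 where "G2 = eval_fps (fps_deriv (fps_deriv (Gn n)))"
  define S where "S x = exp (-2*n*x) * G0 (x^2)" for x
  define S1 where "S1 x = exp (-2*n*x) * (-2*n * G0 (x^2) + 2*x * G1 (x^2))" for x
  define S2 where "S2 x = exp (-2*n*x) * (4*n^2 * G0 (x^2) - 8*n*x * G1 (x^2) + 2 * G1 (x^2) + 4*x^2 * G2 (x^2))" for x
  have c0: "((\<lambda>x. G0 (x^2)) has_real_derivative G1 (x^2) * (2*x)) (at x)" for x
    unfolding G0_def G1_def by (rule eval_chain2[OF Gn_radius])
  have c1: "((\<lambda>x. G1 (x^2)) has_real_derivative G2 (x^2) * (2*x)) (at x)" for x
    unfolding G1_def G2_def by (rule eval_chain2[OF Gn_rad1])
  have c2: "((\<lambda>x. G2 (x^2)) has_real_derivative eval_fps (fps_deriv (fps_deriv (fps_deriv (Gn n)))) (x^2) * (2*x)) (at x)" for x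
    unfolding G2_def by (rule eval_chain2[OF Gn_rad2])
  have d1: "(S has_real_derivative S1 x) (at x)" for x
    unfolding S_def S1_def
    by (rule derivative_eq_intros c0 refl | simp)+ (simp add: algebra_simps)
  have d2: "(S1 has_real_derivative S2 x) (at x)" for x
    unfolding S1_def S2_def
    by (rule derivative_eq_intros c0 c1 refl | simp)+ (simp add: algebra_simps power2_eq_square)
  show ?thesis
  proof (rule assemble[where U = UNIV and S = S and ?S1.0 = S1 and ?S2.0 = S2])
    show "open (UNIV :: real set)" "Icset 0 \<subseteq> UNIV" by auto
    show "Snc 0 n x = S x" for x by (simp add: Snc_c0 S_def G0_def)
    show "(S has_real_derivative S1 x) (at x)" for x by (rule d1)
    show "(S1 has_real_derivative S2 x) (at x)" for x by (rule d2)
    show "S x > 0" if "x \<in> Icset 0" for x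
      using Gn_ge1[of "x^2" n] unfolding S_def G0_def by (simp add: less_le_trans[OF zero_less_one])
    show "x*(1+0*x)*(1+2*0*x) * S2 x + (4*(n+0)*x*(1+0*x)+1) * S1 x + 2*n*(1+2*0*x) * S x = 0" for x
    proof -
      have "x*(1+0*x)*(1+2*0*x) * S2 x + (4*(n+0)*x*(1+0*x)+1) * S1 x + 2*n*(1+2*0*x) * S x
          = 4 * x * exp (-2*n*x) * (x^2 * G2 (x^2) + G1 (x^2) - n^2 * G0 (x^2))"
        unfolding S_def S1_def S2_def by (simp add: algebra_simps power2_eq_square)
      also have "x^2 * G2 (x^2) + G1 (x^2) - n^2 * G0 (x^2) = 0"
        unfolding G0_def G1_def G2_def by (rule Gn_eval_ode)
      finally show ?thesis by simp
    qed
    show "isCont S2 x" for x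
    proof -
      have "isCont (\<lambda>x. G0 (x^2)) x" "isCont (\<lambda>x. G1 (x^2)) x" "isCont (\<lambda>x. G2 (x^2)) x"
        using c0 c1 c2 by (auto intro: DERIV_isCont)
      thus ?thesis unfolding S2_def by (auto intro!: continuous_intros)
    qed
    show "0 \<le> (0::real) \<Longrightarrow> S 0 = 1 \<and> S1 0 = -2*n \<and> S2 0 = 6*n^2 + 2*n*0"
      by (simp add: S_def S1_def S2_def G0_def G1_def eval_fps_at_0 Gn_def gcoef_def)
    show "0 \<le> (0::real) \<Longrightarrow> n > 0" using n .
  qed
qed

lemma ode_alg0:
  fixes c a x \<sigma> F0 F1 F2 s :: real
  assumes s: "1 + c*x = s" "s \<noteq> 0"
  shows "x * s *(1+2*c*x) * (\<sigma> * ((-2*a*c/s)*(-2*a*c/s * F0 + 2*c^2*x/s^3 * F1) + 2*a*c^2/s^2 * F0 - 2*a*c/s * (2*c^2*x/s^3) * F1 + 2*c^2*(1-2*c*x)/s^4 * F1 + (2*c^2*x/s^3)^2 * F2))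
     + (4*(a*c+c)*x * s+1) * (\<sigma> * (-2*a*c/s * F0 + 2*c^2*x/s^3 * F1)) + 2*(a*c)*(1+2*c*x) * (\<sigma> * F0)
   = \<sigma> * (4*c^2*x/s) * ((c*x/s)^2*(1-(c*x/s)^2)*F2 + (1-(2*a+1)*(c*x/s)^2)*F1 - a^2*F0)"
proof -
  define t where "t = inverse s"
  have st: "s * t = 1" using s(2) by (simp add: t_def)
  have sx: "s = 1 + c*x" using s by simp
  show ?thesis unfolding divide_inverse power_inverse[symmetric] t_def[symmetric]
    using st sx by algebra
qed

lemma eval_chain:
  fixes f :: "real fps"
  assumes "ereal \<bar>g x\<bar> < fps_conv_radius f" "(g has_real_derivative g') (at x)"
  shows "((\<lambda>x. eval_fps f (g x)) has_real_derivative eval_fps (fps_deriv f) (g x) * g') (at x)"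
proof -
  have "(eval_fps f has_real_derivative eval_fps (fps_deriv f) (g x)) (at (g x))"
    using assms(1) by (intro has_field_derivative_eval_fps) simp
  thus ?thesis using assms(2) by (rule DERIV_chain2)
qed

lemma gen_F:
  fixes c n x :: real
  assumes c: "c \<noteq> 0" and s: "1 + c*x > 0" and r: "ereal \<bar>(c*x/(1+c*x))^2\<bar> < fps_conv_radius (Fa (n/c))"
  defines "a \<equiv> n/c"
  defines "sg \<equiv> \<lambda>x. (1+c*x) powr (-2*a)"
  defines "zz \<equiv> \<lambda>x. (c*x/(1+c*x))^2"
  defines "z1 \<equiv> \<lambda>x. 2*c^2*x/(1+c*x)^3"
  defines "z2 \<equiv> \<lambda>x. 2*c^2*(1-2*c*x)/(1+c*x)^4"
  defines "F0 \<equiv> eval_fps (Fa a)"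
  defines "F1 \<equiv> eval_fps (fps_deriv (Fa a))"
  defines "F2 \<equiv> eval_fps (fps_deriv (fps_deriv (Fa a)))"
  defines "S \<equiv> \<lambda>x. sg x * F0 (zz x)"
  defines "S1 \<equiv> \<lambda>x. sg x * (-2*a*c/(1+c*x) * F0 (zz x) + z1 x * F1 (zz x))"
  defines "S2 \<equiv> \<lambda>x. sg x * ((-2*a*c/(1+c*x))*(-2*a*c/(1+c*x) * F0 (zz x) + z1 x * F1 (zz x))
          + 2*a*c^2/(1+c*x)^2 * F0 (zz x) - 2*a*c/(1+c*x) * z1 x * F1 (zz x) + z2 x * F1 (zz x) + (z1 x)^2 * F2 (zz x))"
  shows "(S has_real_derivative S1 x) (at x)"
    and "(S1 has_real_derivative S2 x) (at x)"
    and "x*(1+c*x)*(1+2*c*x) * S2 x + (4*(n+c)*x*(1+c*x)+1) * S1 x + 2*n*(1+2*c*x) * S x = 0"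
    and "S x > 0"
    and "isCont S2 x"
proof -
  have n: "n = a*c" using c by (simp add: a_def)
  have r': "ereal \<bar>zz x\<bar> < fps_conv_radius (Fa a)" using r by (simp add: zz_def a_def)
  have r1: "ereal \<bar>zz x\<bar> < fps_conv_radius (fps_deriv (Fa a))" by (rule rad_deriv[OF r'])
  have r2: "ereal \<bar>zz x\<bar> < fps_conv_radius (fps_deriv (fps_deriv (Fa a)))" by (rule rad_deriv[OF r1])
  obtain s where sdef: "1 + c*x = s" by blast
  have sn: "s \<noteq> 0" and sp: "s > 0" using s sdef by auto
  have dzz: "(zz has_real_derivative z1 x) (at x)"
    unfolding zz_def z1_def
    apply (rule derivative_eq_intros refl | (use s in simp; fail))+
    apply (simp only: sdef)
    apply (simp add: field_simps sn)
    apply (simp only: sdef[symmetric])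
    by algebra
  have dz1: "(z1 has_real_derivative z2 x) (at x)"
    unfolding z1_def z2_def
    apply (rule derivative_eq_intros refl | (use s in simp; fail))+
    apply (simp only: sdef)
    apply (simp add: field_simps sn)
    apply (simp only: sdef[symmetric])
    by algebra
  have dq: "((\<lambda>x. -2*a*c/(1+c*x)) has_real_derivative 2*a*c^2/(1+c*x)^2) (at x)"
    apply (rule derivative_eq_intros refl | (use s in simp; fail))+
    apply (simp only: sdef)
    apply (simp add: field_simps sn power2_eq_square)
    done
  have dsg: "(sg has_real_derivative (-2*a*c/(1+c*x)) * sg x) (at x)"
  proof -
    have "((\<lambda>x. (1+c*x) powr (-2*a)) has_real_derivative (-2*a) * (1+c*x) powr (-2*a - of_nat 1) * c) (at x)"
      by (rule DERIV_fun_powr) (use s in \<open>auto intro!: derivative_eq_intros\<close>)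
    moreover have "(-2*a) * (1+c*x) powr (-2*a - of_nat 1) * c = (-2*a*c/(1+c*x)) * sg x"
      unfolding sg_def using s by (simp add: powr_diff powr_one)
    ultimately show ?thesis unfolding sg_def by simp
  qed
  have dF0: "((\<lambda>x. F0 (zz x)) has_real_derivative F1 (zz x) * z1 x) (at x)"
    unfolding F0_def F1_def by (rule eval_chain[OF r' dzz])
  have dF1: "((\<lambda>x. F1 (zz x)) has_real_derivative F2 (zz x) * z1 x) (at x)"
    unfolding F1_def F2_def by (rule eval_chain[OF r1 dzz])
  have dF2: "((\<lambda>x. F2 (zz x)) has_real_derivative eval_fps (fps_deriv (fps_deriv (fps_deriv (Fa a)))) (zz x) * z1 x) (at x)"
    unfolding F2_def by (rule eval_chain[OF r2 dzz])
  show "(S has_real_derivative S1 x) (at x)"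
    unfolding S_def S1_def using DERIV_mult[OF dsg dF0] by (simp add: algebra_simps)
  have dA: "((\<lambda>x. -2*a*c/(1+c*x) * F0 (zz x) + z1 x * F1 (zz x)) has_real_derivative
      2*a*c^2/(1+c*x)^2 * F0 (zz x) - 2*a*c/(1+c*x) * z1 x * F1 (zz x) + z2 x * F1 (zz x) + (z1 x)^2 * F2 (zz x)) (at x)"
    using DERIV_add[OF DERIV_mult[OF dq dF0] DERIV_mult[OF dz1 dF1]]
    by (simp add: algebra_simps power2_eq_square)
  show "(S1 has_real_derivative S2 x) (at x)"
    unfolding S1_def S2_def using DERIV_mult[OF dsg dA] by (simp add: algebra_simps)
  have hyp: "zz x*(1-zz x) * F2 (zz x) + (1 - (2*a+1)*zz x) * F1 (zz x) - a^2 * F0 (zz x) = 0"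
    unfolding F0_def F1_def F2_def by (rule Fa_eval_ode) (use r' in simp)
  note e = ode_alg0[OF sdef sn, where a=a and \<sigma>="sg x" and ?F0.0="F0 (zz x)" and ?F1.0="F1 (zz x)" and ?F2.0="F2 (zz x)"]
  have "x*(1+c*x)*(1+2*c*x) * S2 x + (4*(n+c)*x*(1+c*x)+1) * S1 x + 2*n*(1+2*c*x) * S x
      = sg x * (4*c^2*x/s) * ((c*x/s)^2*(1-(c*x/s)^2)*F2 (zz x) + (1-(2*a+1)*(c*x/s)^2)*F1 (zz x) - a^2*F0 (zz x))"
    unfolding S_def S1_def S2_def z1_def z2_def n using e by (simp only: sdef)
  also have "(c*x/s)^2 = zz x" unfolding zz_def sdef ..
  finally show "x*(1+c*x)*(1+2*c*x) * S2 x + (4*(n+c)*x*(1+c*x)+1) * S1 x + 2*n*(1+2*c*x) * S x = 0"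
    using hyp by simp
  have "sg x > 0" unfolding sg_def using s by simp
  moreover have "F0 (zz x) \<ge> 1" unfolding F0_def by (rule Fa_ge1) (use r' in \<open>auto simp: zz_def\<close>)
  ultimately show "S x > 0" unfolding S_def by (simp add: less_le_trans[OF zero_less_one])
  have "isCont z2 x" unfolding z2_def using sdef sn by (auto intro!: continuous_intros)
  moreover have "isCont sg x" "isCont zz x" "isCont z1 x"
     "isCont (\<lambda>x. F0 (zz x)) x" "isCont (\<lambda>x. F1 (zz x)) x" "isCont (\<lambda>x. F2 (zz x)) x"
    using dsg dzz dz1 dF0 dF1 dF2 by (auto intro: DERIV_isCont)
  ultimately show "isCont S2 x" unfolding S2_def using sn sdef
    by (auto intro!: continuous_intros)
qed


lemma Snc_F:
  fixes c n x :: real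
  assumes c: "c \<noteq> 0" and s: "1 + c*x > 0" and r: "ereal \<bar>(c*x/(1+c*x))^2\<bar> < fps_conv_radius (Fa (n/c))"
  shows "Snc c n x = (1+c*x) powr (-2*(n/c)) * eval_fps (Fa (n/c)) ((c*x/(1+c*x))^2)"
proof -
  define a where "a = n/c"
  define z where "z = (c*x/(1+c*x))^2"
  have "(\<lambda>k. fps_nth (Fa a) k * z^k) sums eval_fps (Fa a) z"
    by (rule sums_eval_fps) (use r in \<open>simp add: a_def z_def\<close>)
  hence sm: "(\<lambda>k. (1+c*x) powr (-2*a) * (fps_nth (Fa a) k * z^k)) sums ((1+c*x) powr (-2*a) * eval_fps (Fa a) z)"
    by (rule sums_mult)
  have pk: "(pnk c n k x)^2 = (1+c*x) powr (-2*a) * (fps_nth (Fa a) k * z^k)" for k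
  proof -
    have p: "pnk c n k x = (-1)^k * ((-a) gchoose k) * (c*x)^k * (1+c*x) powr (-a - real k)"
      using c s by (simp add: pnk_def rpow_def a_def)
    have q: "((1+c*x) powr (-a - real k))^2 = (1+c*x) powr (-2*a) / (1+c*x)^(2*k)"
    proof -
      have "((1+c*x) powr (-a - real k))^2 = (1+c*x) powr (-2*a - real (2*k))"
        using s by (subst powr_power) (auto simp: algebra_simps)
      also have "\<dots> = (1+c*x) powr (-2*a) / (1+c*x)^(2*k)"
        using s powr_realpow[of "1+c*x" "2*k"] by (simp add: powr_diff)
      finally show ?thesis .
    qed
    have m1: "((-1::real)^k)^2 = 1" by (induct k) (auto simp: power2_eq_square)
    have "(pnk c n k x)^2 = ((-a) gchoose k)^2 * ((c*x)^k)^2 * ((1+c*x) powr (-a - real k))^2"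
      unfolding p power_mult_distrib m1 by simp
    also have "\<dots> = (1+c*x) powr (-2*a) * (((-a) gchoose k)^2 * (((c*x)^k)^2 / (1+c*x)^(2*k)))"
      unfolding q by (simp add: field_simps)
    also have "((c*x)^k)^2 / (1+c*x)^(2*k) = z^k"
      unfolding z_def by (simp add: power_divide flip: power_mult) (simp add: mult.commute)
    finally show ?thesis by (simp add: Fa_def Bc_def)
  qed
  show ?thesis unfolding Snc_def pk using sm by (simp add: sums_iff a_def z_def)
qed

lemma case_cpos:
  fixes c n :: real
  assumes c: "c > 0" and nc: "n > c"
  shows "(c \<ge> 0 \<longrightarrow> concave_on {0..} (Rnc c n) \<and> strict_mono_on {0..} (Rnc c n))
    \<and> (\<exists>u u' :: real \<Rightarrow> real. \<forall>x \<in> Icset c.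
          (Rnc c n has_real_derivative u x) (at x within Icset c)
        \<and> (u has_real_derivative u' x) (at x within Icset c)
        \<and> x * (1 + c * x) * (1 + 2 * c * x) * u' x
            = x * (1 + c * x) * (1 + 2 * c * x) * (u x)\<^sup>2
              - (4 * (n + c) * x * (1 + c * x) + 1) * u x + 2 * n * (1 + 2 * c * x))"
proof -
  define a where "a = n/c"
  have apos: "a > 0" using c nc by (simp add: a_def)
  have rad: "fps_conv_radius (Fa (n/c)) = 1" using Fa_radius_pos[OF apos] by (simp add: a_def)
  define U where "U = {-1/(2*c)<..}"
  have inU: "1 + c*x > 0 \<and> ereal \<bar>(c*x/(1+c*x))^2\<bar> < fps_conv_radius (Fa (n/c))" if "x \<in> U" for x
  proof -
    have x: "x > -1/(2*c)" using that by (simp add: U_def)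
    hence cx: "c*x > -1/2" using c by (simp add: field_simps)
    hence s: "1 + c*x > 0" by simp
    have "c*x/(1+c*x) < 1" using s by (simp add: divide_less_eq)
    moreover have "-1 < c*x/(1+c*x)" using s cx by (simp add: less_divide_eq)
    ultimately have "(c*x/(1+c*x))^2 < 1" using abs_square_less_1 by (auto simp: abs_less_iff)
    hence "\<bar>(c*x/(1+c*x))^2\<bar> < 1" by simp
    thus ?thesis using s rad by simp
  qed
  define S where "S \<equiv> \<lambda>x. (1+c*x) powr (-2*(n/c)) * eval_fps (Fa (n/c)) ((c*x/(1+c*x))^2)"
  define S1 where "S1 \<equiv> \<lambda>x. (1+c*x) powr (-2*(n/c)) * (-2*(n/c)*c/(1+c*x) * eval_fps (Fa (n/c)) ((c*x/(1+c*x))^2)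
      + 2*c^2*x/(1+c*x)^3 * eval_fps (fps_deriv (Fa (n/c))) ((c*x/(1+c*x))^2))"
  define S2 where "S2 \<equiv> \<lambda>x. (1+c*x) powr (-2*(n/c)) * ((-2*(n/c)*c/(1+c*x))*(-2*(n/c)*c/(1+c*x) * eval_fps (Fa (n/c)) ((c*x/(1+c*x))^2)
      + 2*c^2*x/(1+c*x)^3 * eval_fps (fps_deriv (Fa (n/c))) ((c*x/(1+c*x))^2))
          + 2*(n/c)*c^2/(1+c*x)^2 * eval_fps (Fa (n/c)) ((c*x/(1+c*x))^2)
          - 2*(n/c)*c/(1+c*x) * (2*c^2*x/(1+c*x)^3) * eval_fps (fps_deriv (Fa (n/c))) ((c*x/(1+c*x))^2)
          + 2*c^2*(1-2*c*x)/(1+c*x)^4 * eval_fps (fps_deriv (Fa (n/c))) ((c*x/(1+c*x))^2)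
          + (2*c^2*x/(1+c*x)^3)^2 * eval_fps (fps_deriv (fps_deriv (Fa (n/c)))) ((c*x/(1+c*x))^2))"
  have c0: "c \<noteq> 0" using c by simp
  note gF = gen_F[OF c0 conjunct1[OF inU] conjunct2[OF inU]]
  have IU: "Icset c \<subseteq> U"
  proof
    fix x assume "x \<in> Icset c"
    hence "x \<ge> 0" using c by (simp add: Icset_def)
    moreover have "-1/(2*c) < 0" using c by simp
    ultimately have "-1/(2*c) < x" by linarith
    thus "x \<in> U" unfolding U_def by simp
  qed
  show ?thesis
  proof (rule assemble[where U = U and S = S and ?S1.0 = S1 and ?S2.0 = S2])
    show "open U" by (simp add: U_def)
    show "Icset c \<subseteq> U" by (rule IU)
    show "Snc c n x = S x" if "x \<in> U" for x
      unfolding S_def using Snc_F[OF c0 conjunct1[OF inU[OF that]] conjunct2[OF inU[OF that]]] by simp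
    show "(S has_real_derivative S1 x) (at x)" if "x \<in> U" for x
      unfolding S_def S1_def by (rule gF(1)[OF that that])
    show "(S1 has_real_derivative S2 x) (at x)" if "x \<in> U" for x
      unfolding S1_def S2_def by (rule gF(2)[OF that that])
    show "S x > 0" if "x \<in> Icset c" for x
      unfolding S_def using gF(4)[of x] IU that by auto
    show "x*(1+c*x)*(1+2*c*x) * S2 x + (4*(n+c)*x*(1+c*x)+1) * S1 x + 2*n*(1+2*c*x) * S x = 0"
      if "x \<in> Icset c" for x
      unfolding S_def S1_def S2_def using gF(3)[of x] IU that by auto
    show "isCont S2 x" if "c \<ge> 0" "x \<ge> 0" for x
    proof -
      have xU: "x \<in> U" using IU that by (auto simp: Icset_def)
      show ?thesis unfolding S2_def by (rule gF(5)[OF xU xU])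
    qed
    show "c \<ge> 0 \<Longrightarrow> S 0 = 1 \<and> S1 0 = -2*n \<and> S2 0 = 6*n^2 + 2*n*c"
      using c0 by (simp add: S_def S1_def S2_def eval_fps_at_0 Fa_def Bc_def field_simps power2_eq_square)
    show "c \<ge> 0 \<Longrightarrow> n > c" using nc .
  qed
qed

lemma rpow_nat_diff:
  assumes "k \<le> l"
  shows "rpow b (real l - real k) = b ^ (l - k)"
proof -
  have e: "real l - real k = real (l - k)" using assms by simp
  show ?thesis
  proof (cases "b > 0")
    case True thus ?thesis unfolding rpow_def e by (simp add: powr_realpow)
  next
    case False thus ?thesis unfolding rpow_def e by simp
  qed
qed

lemma case_cneg_poly:
  fixes c n :: real and l :: nat
  assumes c: "c < 0" and nl: "n = - c * real l"
  defines "p \<equiv> (\<Sum>k\<le>l. smult ((real (l choose k))^2) ([:0,c:]^(2*k) * [:1,c:]^(2*(l-k))))"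
  shows "Snc c n x = poly p x"
proof -
  have a: "-n/c = real l" using c nl by (simp add: field_simps)
  have pk: "pnk c n k x = (if k \<le> l then (-1)^k * real (l choose k) * (c*x)^k * (1+c*x)^(l-k) else 0)" for k
  proof (cases "k \<le> l")
    case True thus ?thesis using c unfolding pnk_def a
      by (simp add: rpow_nat_diff binomial_gbinomial[symmetric])
  next
    case False thus ?thesis using c unfolding pnk_def a
      by (simp add: binomial_gbinomial[symmetric])
  qed
  have "Snc c n x = (\<Sum>k\<le>l. (pnk c n k x)^2)"
    unfolding Snc_def by (rule suminf_finite) (auto simp: pk)
  also have "\<dots> = (\<Sum>k\<le>l. (real (l choose k))^2 * (c*x)^(2*k) * (1+c*x)^(2*(l-k)))"
    by (intro sum.cong refl) (simp add: pk power_mult_distrib power_mult[symmetric] mult.commute)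
  also have "\<dots> = poly p x"
    unfolding p_def by (simp add: poly_sum poly_power mult_ac)
  finally show ?thesis .
qed


lemma case_cneg:
  fixes c n :: real and l :: nat
  assumes c: "c < 0" and nl: "n = - c * real l" and n: "n > 0"
  shows "(c \<ge> 0 \<longrightarrow> concave_on {0..} (Rnc c n) \<and> strict_mono_on {0..} (Rnc c n))
    \<and> (\<exists>u u' :: real \<Rightarrow> real. \<forall>x \<in> Icset c.
          (Rnc c n has_real_derivative u x) (at x within Icset c)
        \<and> (u has_real_derivative u' x) (at x within Icset c)
        \<and> x * (1 + c * x) * (1 + 2 * c * x) * u' x
            = x * (1 + c * x) * (1 + 2 * c * x) * (u x)\<^sup>2
              - (4 * (n + c) * x * (1 + c * x) + 1) * u x + 2 * n * (1 + 2 * c * x))"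
proof -
  define p where "p = (\<Sum>k\<le>l. smult ((real (l choose k))^2) ([:0,c:]^(2*k) * [:1,c:]^(2*(l-k))))"
  have Sp: "Snc c n x = poly p x" for x unfolding p_def by (rule case_cneg_poly[OF c nl])
  have c0: "c \<noteq> 0" using c by simp
  have rad: "fps_conv_radius (Fa (n/c)) = \<infinity>"
  proof -
    have "n/c = - real l" using c nl by (simp add: field_simps)
    thus ?thesis by (simp add: Fa_radius_nat)
  qed
  define V where "V = {x. 1 + c*x > 0}"
  have oV: "open V" unfolding V_def by (intro open_Collect_less continuous_intros)
  have inV: "1 + c*x > 0 \<and> ereal \<bar>(c*x/(1+c*x))^2\<bar> < fps_conv_radius (Fa (n/c))" if "x \<in> V" for x
    using that rad by (simp add: V_def)
  define S where "S \<equiv> \<lambda>x. (1+c*x) powr (-2*(n/c)) * eval_fps (Fa (n/c)) ((c*x/(1+c*x))^2)"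
  define S1 where "S1 \<equiv> \<lambda>x. (1+c*x) powr (-2*(n/c)) * (-2*(n/c)*c/(1+c*x) * eval_fps (Fa (n/c)) ((c*x/(1+c*x))^2)
      + 2*c^2*x/(1+c*x)^3 * eval_fps (fps_deriv (Fa (n/c))) ((c*x/(1+c*x))^2))"
  define S2 where "S2 \<equiv> \<lambda>x. (1+c*x) powr (-2*(n/c)) * ((-2*(n/c)*c/(1+c*x))*(-2*(n/c)*c/(1+c*x) * eval_fps (Fa (n/c)) ((c*x/(1+c*x))^2)
      + 2*c^2*x/(1+c*x)^3 * eval_fps (fps_deriv (Fa (n/c))) ((c*x/(1+c*x))^2))
          + 2*(n/c)*c^2/(1+c*x)^2 * eval_fps (Fa (n/c)) ((c*x/(1+c*x))^2)
          - 2*(n/c)*c/(1+c*x) * (2*c^2*x/(1+c*x)^3) * eval_fps (fps_deriv (Fa (n/c))) ((c*x/(1+c*x))^2)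
          + 2*c^2*(1-2*c*x)/(1+c*x)^4 * eval_fps (fps_deriv (Fa (n/c))) ((c*x/(1+c*x))^2)
          + (2*c^2*x/(1+c*x)^3)^2 * eval_fps (fps_deriv (fps_deriv (Fa (n/c)))) ((c*x/(1+c*x))^2))"
  note gF = gen_F[OF c0 conjunct1[OF inV] conjunct2[OF inV]]
  have dS: "(S has_real_derivative S1 x) (at x)" if "x \<in> V" for x
    unfolding S_def S1_def by (rule gF(1)[OF that that])
  have dS1: "(S1 has_real_derivative S2 x) (at x)" if "x \<in> V" for x
    unfolding S1_def S2_def by (rule gF(2)[OF that that])
  have odeV: "x*(1+c*x)*(1+2*c*x) * S2 x + (4*(n+c)*x*(1+c*x)+1) * S1 x + 2*n*(1+2*c*x) * S x = 0"
    if "x \<in> V" for x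
    unfolding S_def S1_def S2_def by (rule gF(3)[OF that that])
  have eqV: "poly p x = S x" if "x \<in> V" for x
    unfolding S_def using Snc_F[OF c0 conjunct1[OF inV[OF that]] conjunct2[OF inV[OF that]]] Sp[of x] by simp
  have eq1: "poly (pderiv p) x = S1 x" if "x \<in> V" for x
  proof -
    have "(poly p has_real_derivative S1 x) (at x)"
      by (rule has_field_derivative_transform_within_open[OF dS[OF that] oV that]) (simp add: eqV)
    thus ?thesis using poly_DERIV[of p x] by (rule DERIV_unique[rotated])
  qed
  have eq2: "poly (pderiv (pderiv p)) x = S2 x" if "x \<in> V" for x
  proof -
    have "(poly (pderiv p) has_real_derivative S2 x) (at x)"
      by (rule has_field_derivative_transform_within_open[OF dS1[OF that] oV that]) (simp add: eq1)
    thus ?thesis using poly_DERIV[of "pderiv p" x] by (rule DERIV_unique[rotated])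
  qed
  define E where "E x = x*(1+c*x)*(1+2*c*x) * poly (pderiv (pderiv p)) x + (4*(n+c)*x*(1+c*x)+1) * poly (pderiv p) x + 2*n*(1+2*c*x) * poly p x" for x
  have E0: "E x = 0" if "x \<in> V" for x
    unfolding E_def using odeV[OF that] eq1[OF that] eq2[OF that] eqV[OF that] by simp
  have Eall: "E x = 0" if "x \<le> -1/c" for x
  proof (cases "x < -1/c")
    case True
    hence "x \<in> V" using c by (simp add: V_def field_simps)
    thus ?thesis by (rule E0)
  next
    case False
    hence x: "x = -1/c" using that by simp
    have cE: "isCont E x" unfolding E_def by (intro continuous_intros)
    have "(E \<longlongrightarrow> E x) (at_left x)" using cE unfolding isCont_def by (rule tendsto_mono[OF at_le, rotated]) auto
    moreover have "eventually (\<lambda>t. E t = 0) (at_left x)"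
    proof -
      have "eventually (\<lambda>t. t < x) (at_left x)" by (simp add: eventually_at_filter)
      thus ?thesis
      proof eventually_elim
        case (elim t)
        hence "t \<in> V" using c x by (simp add: V_def field_simps)
        thus ?case by (rule E0)
      qed
    qed
    hence "(E \<longlongrightarrow> 0) (at_left x)" by (rule tendsto_eventually)
    ultimately show "E x = 0" by (rule tendsto_unique[rotated 1]) simp
  qed
  have psum: "poly p x = (\<Sum>k\<le>l. (real (l choose k))^2 * (c*x)^(2*k) * (1+c*x)^(2*(l-k)))" for x
    unfolding p_def by (simp add: poly_sum poly_power mult_ac)
  have ppos: "poly p x > 0" if "x \<in> Icset c" for x
  proof -
    have x: "0 \<le> x" "x \<le> -1/c" using that c by (auto simp: Icset_def)
    have nn: "\<And>k. 0 \<le> (real (l choose k))^2 * (c*x)^(2*k) * (1+c*x)^(2*(l-k))"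
      by (simp add: power_mult zero_le_mult_iff)
    show ?thesis
    proof (cases "x < -1/c")
      case True
      hence s: "1 + c*x > 0" using c by (simp add: field_simps)
      have "(real (l choose 0))^2 * (c*x)^(2*0) * (1+c*x)^(2*(l-0)) \<le> poly p x"
        unfolding psum by (rule member_le_sum) (use nn in auto)
      moreover have "(real (l choose 0))^2 * (c*x)^(2*0) * (1+c*x)^(2*(l-0)) > 0" using s by simp
      ultimately show ?thesis by linarith
    next
      case False
      hence "x = -1/c" using x by simp
      hence cx: "c*x = -1" using c by simp
      have "(real (l choose l))^2 * (c*x)^(2*l) * (1+c*x)^(2*(l-l)) \<le> poly p x"
        unfolding psum by (rule member_le_sum) (use nn in auto)
      moreover have "(real (l choose l))^2 * (c*x)^(2*l) * (1+c*x)^(2*(l-l)) = 1"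
        unfolding cx by (simp add: power_mult)
      ultimately show ?thesis by linarith
    qed
  qed
  show ?thesis
  proof (rule assemble[where U = UNIV and S = "poly p" and ?S1.0 = "poly (pderiv p)" and ?S2.0 = "poly (pderiv (pderiv p))"])
    show "open (UNIV :: real set)" "Icset c \<subseteq> UNIV" by auto
    show "Snc c n x = poly p x" for x by (rule Sp)
    show "(poly p has_real_derivative poly (pderiv p) x) (at x)" for x by (rule poly_DERIV)
    show "(poly (pderiv p) has_real_derivative poly (pderiv (pderiv p)) x) (at x)" for x by (rule poly_DERIV)
    show "poly p x > 0" if "x \<in> Icset c" for x using ppos[OF that] .
    show "x*(1+c*x)*(1+2*c*x) * poly (pderiv (pderiv p)) x + (4*(n+c)*x*(1+c*x)+1) * poly (pderiv p) x + 2*n*(1+2*c*x) * poly p x = 0"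
      if "x \<in> Icset c" for x
      using Eall[of x] that c unfolding E_def by (simp add: Icset_def)
  qed (use c in auto)
qed

theorem theorem4p1:
  fixes c n :: real
  assumes "n > 0"
    and "(c \<ge> 0 \<and> n > c) \<or> (c < 0 \<and> (\<exists>l::nat. n = - c * real l))"
  shows "(c \<ge> 0 \<longrightarrow> concave_on {0..} (Rnc c n) \<and> strict_mono_on {0..} (Rnc c n))
    \<and> (\<exists>u u' :: real \<Rightarrow> real. \<forall>x \<in> Icset c.
          (Rnc c n has_real_derivative u x) (at x within Icset c)
        \<and> (u has_real_derivative u' x) (at x within Icset c)
        \<and> x * (1 + c * x) * (1 + 2 * c * x) * u' x
            = x * (1 + c * x) * (1 + 2 * c * x) * (u x)\<^sup>2
              - (4 * (n + c) * x * (1 + c * x) + 1) * u x + 2 * n * (1 + 2 * c * x))"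
proof -
  consider "c = 0" | "c > 0" "n > c" | l :: nat where "c < 0" "n = - c * real l"
    using assms(2) by force
  thus ?thesis
  proof cases
    case 1
    show ?thesis unfolding 1 by (rule case_c0[OF assms(1)])
  next
    case 2
    show ?thesis by (rule case_cpos[OF 2])
  next
    case 3
    show ?thesis by (rule case_cneg[OF 3 assms(1)])
  qed
qed

end
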